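(* For each $q\ge3$ (uniformly in $\xi_\infty\in[0,2\pi)$), $$\xi_q(\varphi_\infty(\xi_\infty))-\xi_\infty=O_{e_0,c}(1/q^2)\qquad\text{and}\qquad k_q-e_0=O_{e_0,c}(1/q^2),$$ where $O_{e_0,c}(X)$ denotes a quantity bounded in absolute value by $X$ times a constant depending only on $e_0$ and $c$.
   Context: Ellipse with semi-axes $0<b\le a$, eccentricity $e_0=\sqrt{1-b^2/a^2}\in[0,1)$, semi-focal distance $c=\sqrt{a^2-b^2}$. For $0\le k<1$, $F(\varphi;k)=\int_0^\varphi(1-k^2\sin^2\tau)^{-1/2}d\tau$, $K(k)=F(\pi/2;k)$, and $\mathrm{am}(\cdot;k)$ is the inverse function of $F(\cdot;k)$ (Jacobi amplitude). For $\lambda\in(0,b)$, $k_\lambda=\sqrt{(a^2-b^2)/(a^2-\lambda^2)}$, $\omega_\lambda=F(\arcsin(\lambda/b);k_\lambda)/(2K(k_\lambda))$ (strictly increasing from $0$ to $1/2$); for $q\ge3$, $\omega_{\lambda_q}=1/q$ and $k_q=k_{\lambda_q}$. Define $\xi_q(\varphi)=\frac{2\pi}{4K(k_q)}F(\varphi;k_q)$ and $\varphi_\infty(\xi)=\mathrm{am}\big(\frac{4K(e_0)}{2\pi}\xi;e_0\big)$. *)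

theory Defs
  imports "HOL-Analysis.Analysis"
begin

definition ellF :: "real \<Rightarrow> real \<Rightarrow> real" where
  "ellF phi k = (if 0 \<le> phi
     then integral {0..phi} (\<lambda>t. 1 / sqrt (1 - k\<^sup>2 * (sin t)\<^sup>2))
     else - integral {phi..0} (\<lambda>t. 1 / sqrt (1 - k\<^sup>2 * (sin t)\<^sup>2)))"

definition ellK :: "real \<Rightarrow> real" where
  "ellK k = ellF (pi / 2) k"

definition jam :: "real \<Rightarrow> real \<Rightarrow> real" where
  "jam u k = (THE phi. ellF phi k = u)"

definition ecc0 :: "real \<Rightarrow> real \<Rightarrow> real" where
  "ecc0 a b = sqrt (1 - b\<^sup>2 / a\<^sup>2)"

definition semifocal :: "real \<Rightarrow> real \<Rightarrow> real" where
  "semifocal a b = sqrt (a\<^sup>2 - b\<^sup>2)"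

definition k_lam :: "real \<Rightarrow> real \<Rightarrow> real \<Rightarrow> real" where
  "k_lam a b l = sqrt ((a\<^sup>2 - b\<^sup>2) / (a\<^sup>2 - l\<^sup>2))"

definition omega_lam :: "real \<Rightarrow> real \<Rightarrow> real \<Rightarrow> real" where
  "omega_lam a b l = ellF (arcsin (l / b)) (k_lam a b l) / (2 * ellK (k_lam a b l))"

definition lam_q :: "real \<Rightarrow> real \<Rightarrow> nat \<Rightarrow> real" where
  "lam_q a b q = (THE l. 0 < l \<and> l < b \<and> omega_lam a b l = 1 / real q)"

definition k_q :: "real \<Rightarrow> real \<Rightarrow> nat \<Rightarrow> real" where
  "k_q a b q = k_lam a b (lam_q a b q)"

definition xi_q :: "real \<Rightarrow> real \<Rightarrow> nat \<Rightarrow> real \<Rightarrow> real" where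
  "xi_q a b q phi = 2 * pi / (4 * ellK (k_q a b q)) * ellF phi (k_q a b q)"

definition phi_inf :: "real \<Rightarrow> real \<Rightarrow> real \<Rightarrow> real" where
  "phi_inf a b xi = jam (4 * ellK (ecc0 a b) / (2 * pi) * xi) (ecc0 a b)"

end

theory Submission
  imports Defs
begin


definition fk :: "real \<Rightarrow> real \<Rightarrow> real" where
  "fk k t = 1 / sqrt (1 - k\<^sup>2 * (sin t)\<^sup>2)"

definition G :: "real \<Rightarrow> real \<Rightarrow> real" where
  "G k x = integral {0..x} (fk k)"

definition Lk :: "real \<Rightarrow> real" where
  "Lk \<kappa> = 1 / ((1 - \<kappa>\<^sup>2) * sqrt (1 - \<kappa>\<^sup>2))"

lemma sin2_le1: "(sin (t::real))\<^sup>2 \<le> 1"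
  using abs_sin_le_one[of t] abs_square_le_1 by blast

lemma den_ge: fixes k \<kappa> k1 k2 t s x y :: real assumes "0 \<le> k" "k \<le> \<kappa>" shows "1 - \<kappa>\<^sup>2 \<le> 1 - k\<^sup>2 * (sin t)\<^sup>2"
proof -
  have "k\<^sup>2 \<le> \<kappa>\<^sup>2" using assms by (intro power_mono) auto
  have "k\<^sup>2 * (sin t)\<^sup>2 \<le> k\<^sup>2" using sin2_le1[of t] by (simp add: mult_left_le)
  with \<open>k\<^sup>2 \<le> \<kappa>\<^sup>2\<close> show ?thesis by linarith
qed

lemma kap_pos: fixes k \<kappa> k1 k2 t s x y :: real assumes "0 \<le> \<kappa>" "\<kappa> < 1" shows "0 < 1 - \<kappa>\<^sup>2"
proof -
  have "\<kappa> * \<kappa> \<le> \<kappa> * 1" using assms by (intro mult_left_mono) auto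
  hence "\<kappa>\<^sup>2 < 1" using assms by (simp add: power2_eq_square)
  thus ?thesis by simp
qed

lemma den_pos: fixes k \<kappa> k1 k2 t s x y :: real assumes "0 \<le> k" "k < 1" shows "0 < 1 - k\<^sup>2 * (sin t)\<^sup>2"
  using den_ge[of k k t] assms kap_pos[OF assms] by linarith

lemma fk_cont: fixes k \<kappa> k1 k2 t s x y :: real assumes "0 \<le> k" "k < 1" shows "continuous_on S (fk k)"
  unfolding fk_def using den_pos[OF assms]
  by (intro continuous_intros) (auto simp: less_imp_neq[symmetric])

lemma fk_int: fixes k \<kappa> k1 k2 t s x y :: real assumes "0 \<le> k" "k < 1" shows "fk k integrable_on {x..y}"
  by (rule integrable_continuous_interval[OF fk_cont[OF assms]])

lemma fk_ge1: fixes k \<kappa> k1 k2 t s x y :: real assumes "0 \<le> k" "k < 1" shows "1 \<le> fk k t"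
proof -
  have "1 - k\<^sup>2 * (sin t)\<^sup>2 \<le> 1" by simp
  hence "sqrt (1 - k\<^sup>2 * (sin t)\<^sup>2) \<le> 1" by simp
  thus ?thesis unfolding fk_def using den_pos[OF assms, of t] by simp
qed

lemma fk_le: fixes k \<kappa> k1 k2 t s x y :: real assumes "0 \<le> k" "k \<le> \<kappa>" "\<kappa> < 1" shows "fk k t \<le> 1 / sqrt (1 - \<kappa>\<^sup>2)"
proof -
  have "1 - \<kappa>\<^sup>2 \<le> 1 - k\<^sup>2 * (sin t)\<^sup>2" by (rule den_ge[OF assms(1,2)])
  moreover have "0 < 1 - \<kappa>\<^sup>2" using assms by (intro kap_pos) auto
  ultimately show ?thesis unfolding fk_def
    by (simp add: divide_simps)
qed

lemma fk_mono_t: fixes k \<kappa> k1 k2 t s x y :: real assumes "0 \<le> k" "k < 1" "0 \<le> s" "s \<le> t" "t \<le> pi/2"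
  shows "fk k s \<le> fk k t"
proof -
  have "sin s \<le> sin t" using assms by (intro sin_monotone_2pi_le) auto
  moreover have "0 \<le> sin s" using assms by (intro sin_ge_zero) auto
  ultimately have "(sin s)\<^sup>2 \<le> (sin t)\<^sup>2" by (simp add: power_mono)
  hence "k\<^sup>2 * (sin s)\<^sup>2 \<le> k\<^sup>2 * (sin t)\<^sup>2" by (simp add: mult_left_mono)
  hence "1 - k\<^sup>2 * (sin t)\<^sup>2 \<le> 1 - k\<^sup>2 * (sin s)\<^sup>2" by simp
  thus ?thesis unfolding fk_def using den_pos[OF assms(1,2), of t] den_pos[OF assms(1,2), of s]
    by (simp add: divide_simps)
qed

lemma fk_lip: fixes k \<kappa> k1 k2 t s x y :: real assumes "0 \<le> k1" "k1 \<le> \<kappa>" "0 \<le> k2" "k2 \<le> \<kappa>" "\<kappa> < 1"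
  shows "\<bar>fk k1 t - fk k2 t\<bar> \<le> Lk \<kappa> * \<bar>k1 - k2\<bar>"
proof -
  define A where "A = 1 - k1\<^sup>2 * (sin t)\<^sup>2"
  define B where "B = 1 - k2\<^sup>2 * (sin t)\<^sup>2"
  define m where "m = sqrt (1 - \<kappa>\<^sup>2)"
  have m0: "0 < m" unfolding m_def using assms kap_pos[of \<kappa>] by auto
  have mA: "m \<le> sqrt A" unfolding m_def A_def using den_ge[OF assms(1,2)] by simp
  have mB: "m \<le> sqrt B" unfolding m_def B_def using den_ge[OF assms(3,4)] by simp
  have "0 < sqrt A" "0 < sqrt B" using mA mB m0 by linarith+
  hence A0: "0 < A" and B0: "0 < B" by auto
  have "B - A = (k1 - k2) * ((k1 + k2) * (sin t)\<^sup>2)"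
    unfolding A_def B_def by (simp add: algebra_simps power2_eq_square)
  hence "\<bar>B - A\<bar> = \<bar>k1 - k2\<bar> * \<bar>(k1 + k2) * (sin t)\<^sup>2\<bar>" by (simp add: abs_mult)
  also have "\<bar>(k1 + k2) * (sin t)\<^sup>2\<bar> = (k1 + k2) * (sin t)\<^sup>2" using assms by simp
  finally have "\<bar>B - A\<bar> = \<bar>k1 - k2\<bar> * (k1 + k2) * (sin t)\<^sup>2" by simp
  also have "\<dots> \<le> \<bar>k1 - k2\<bar> * 2"
  proof -
    have "(k1 + k2) * (sin t)\<^sup>2 \<le> 2"
    proof -
      have "k1 + k2 \<le> 2" using assms by linarith
      moreover have "0 \<le> k1 + k2" using assms by linarith
      ultimately show ?thesis using sin2_le1[of t]
        by (metis mult_le_one mult.commute mult_right_le_one_le zero_le_power2 order_trans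
             mult_le_cancel_left2 nat_le_linear)
    qed
    thus ?thesis by (simp add: mult.assoc mult_left_mono)
  qed
  finally have BA: "\<bar>B - A\<bar> \<le> 2 * \<bar>k1 - k2\<bar>" by simp
  have "fk k1 t - fk k2 t = (B - A) / (sqrt A * sqrt B * (sqrt A + sqrt B))"
  proof -
    have "sqrt A + sqrt B > 0" using A0 B0 by (simp add: add_pos_pos)
    have e1: "B - A = (sqrt B - sqrt A) * (sqrt A + sqrt B)"
      using A0 B0 by (simp add: algebra_simps)
    have "fk k1 t - fk k2 t = 1 / sqrt A - 1 / sqrt B" unfolding fk_def A_def B_def by simp
    also have "\<dots> = (sqrt B - sqrt A) / (sqrt A * sqrt B)" using A0 B0 by (simp add: field_simps)
    also have "\<dots> = (B - A) / (sqrt A * sqrt B * (sqrt A + sqrt B))"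
      unfolding e1 using \<open>sqrt A + sqrt B > 0\<close> by simp
    finally show ?thesis .
  qed
  hence "\<bar>fk k1 t - fk k2 t\<bar> = \<bar>B - A\<bar> / (sqrt A * sqrt B * (sqrt A + sqrt B))"
    using A0 B0 by (simp add: abs_divide abs_mult)
  also have "\<dots> \<le> (2 * \<bar>k1 - k2\<bar>) / (m * m * (m + m))"
  proof (rule frac_le)
    show "0 \<le> 2 * \<bar>k1 - k2\<bar>" by simp
    show "\<bar>B - A\<bar> \<le> 2 * \<bar>k1 - k2\<bar>" by (rule BA)
    show "0 < m * m * (m + m)" using m0 by simp
    show "m * m * (m + m) \<le> sqrt A * sqrt B * (sqrt A + sqrt B)"
      using mA mB m0 A0 B0 by (intro mult_mono add_mono) auto
  qed
  also have "\<dots> = Lk \<kappa> * \<bar>k1 - k2\<bar>"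
  proof -
    have "m * m = 1 - \<kappa>\<^sup>2" unfolding m_def using kap_pos[of \<kappa>] assms by simp
    hence e: "m * m * (m + m) = 2 * ((1 - \<kappa>\<^sup>2) * m)"
      by (metis mult.commute mult_2 distrib_left)
    show ?thesis unfolding Lk_def m_def[symmetric] e by simp
  qed
  finally show ?thesis .
qed


lemma G_add: fixes k x y :: real assumes "0 \<le> k" "k < 1" "0 \<le> x" "x \<le> y"
  shows "G k y = G k x + integral {x..y} (fk k)"
  unfolding G_def using Henstock_Kurzweil_Integration.integral_combine[OF assms(3,4) fk_int[OF assms(1,2)]] by simp

lemma int_lower: fixes k x y :: real assumes "0 \<le> k" "k < 1" "x \<le> y"
  shows "y - x \<le> integral {x..y} (fk k)"
proof -
  have "integral {x..y} (\<lambda>_. 1::real) \<le> integral {x..y} (fk k)"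
    by (rule integral_le) (auto simp: fk_int[OF assms(1,2)] fk_ge1[OF assms(1,2)])
  thus ?thesis using assms by simp
qed

lemma int_upper: fixes k \<kappa> x y :: real assumes "0 \<le> k" "k \<le> \<kappa>" "\<kappa> < 1" "x \<le> y"
  shows "integral {x..y} (fk k) \<le> (y - x) / sqrt (1 - \<kappa>\<^sup>2)"
proof -
  have "integral {x..y} (fk k) \<le> integral {x..y} (\<lambda>_. 1 / sqrt (1 - \<kappa>\<^sup>2))"
    using assms by (intro integral_le) (auto simp: fk_int fk_le)
  thus ?thesis using assms by simp
qed

lemma int_upper2: fixes k x y :: real assumes "0 \<le> k" "k < 1" "0 \<le> x" "x \<le> y" "y \<le> pi/2"
  shows "integral {x..y} (fk k) \<le> (y - x) * fk k y"
proof -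
  have "integral {x..y} (fk k) \<le> integral {x..y} (\<lambda>_. fk k y)"
    using assms by (intro integral_le) (auto simp: fk_int fk_mono_t)
  thus ?thesis using assms by (simp add: mult.commute)
qed

lemma int_nonneg: fixes k x y :: real assumes "0 \<le> k" "k < 1" "x \<le> y"
  shows "0 \<le> integral {x..y} (fk k)"
  using int_lower[OF assms] assms by linarith

lemma G_ge: fixes k x :: real assumes "0 \<le> k" "k < 1" "0 \<le> x" shows "x \<le> G k x"
  unfolding G_def using int_lower[OF assms(1,2,3)] by simp

lemma G_0: "G k 0 = 0" unfolding G_def by simp

lemma G_strict: fixes k x y :: real assumes "0 \<le> k" "k < 1" "0 \<le> x" "x < y"
  shows "G k x < G k y"
  using G_add[OF assms(1,2,3), of y] int_lower[OF assms(1,2), of x y] assms by linarith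

lemma G_mono: fixes k x y :: real assumes "0 \<le> k" "k < 1" "0 \<le> x" "x \<le> y"
  shows "G k x \<le> G k y"
  using G_strict[OF assms(1,2,3), of y] assms by (cases "x = y") auto

lemma G_upper: fixes k \<kappa> x :: real assumes "0 \<le> k" "k \<le> \<kappa>" "\<kappa> < 1" "0 \<le> x"
  shows "G k x \<le> x / sqrt (1 - \<kappa>\<^sup>2)"
  unfolding G_def using int_upper[OF assms(1,2,3,4)] by simp

lemma G_lip_x: fixes k \<kappa> x y :: real assumes "0 \<le> k" "k \<le> \<kappa>" "\<kappa> < 1" "0 \<le> x" "0 \<le> y"
  shows "\<bar>G k y - G k x\<bar> \<le> \<bar>y - x\<bar> / sqrt (1 - \<kappa>\<^sup>2)"
proof -
  have k1: "k < 1" using assms by linarith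
  show ?thesis
  proof (cases "x \<le> y")
    case True
    then show ?thesis using G_add[OF assms(1) k1 assms(4) True] int_upper[OF assms(1,2,3) True]
      int_nonneg[OF assms(1) k1 True] by simp
  next
    case False
    hence yx: "y \<le> x" by simp
    then show ?thesis using G_add[OF assms(1) k1 assms(5) yx] int_upper[OF assms(1,2,3) yx]
      int_nonneg[OF assms(1) k1 yx] by simp
  qed
qed

lemma G_lip_k: fixes k1 k2 \<kappa> x :: real
  assumes "0 \<le> k1" "k1 \<le> \<kappa>" "0 \<le> k2" "k2 \<le> \<kappa>" "\<kappa> < 1" "0 \<le> x"
  shows "\<bar>G k1 x - G k2 x\<bar> \<le> x * (Lk \<kappa> * \<bar>k1 - k2\<bar>)"
proof -
  have i1: "fk k1 integrable_on {0..x}" and i2: "fk k2 integrable_on {0..x}"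
    using assms by (auto intro!: fk_int)
  have "G k1 x - G k2 x = integral {0..x} (\<lambda>t. fk k1 t - fk k2 t)"
    unfolding G_def by (rule integral_diff[OF i1 i2, symmetric])
  also have "\<bar>\<dots>\<bar> \<le> integral {0..x} (\<lambda>t. Lk \<kappa> * \<bar>k1 - k2\<bar>)"
  proof -
    have i3: "(\<lambda>t. fk k1 t - fk k2 t) integrable_on {0..x}" using integrable_diff[OF i1 i2] by simp
    have i4: "(\<lambda>t. Lk \<kappa> * \<bar>k1 - k2\<bar>) integrable_on {0..x}"
      using integrable_const[of "Lk \<kappa> * \<bar>k1 - k2\<bar>" 0 x] by simp
    show ?thesis using integral_norm_bound_integral[OF i3 i4] fk_lip[OF assms(1-5)] by simp
  qed
  also have "\<dots> = x * (Lk \<kappa> * \<bar>k1 - k2\<bar>)" using assms by simp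
  finally show ?thesis .
qed

lemma G_cont: fixes k b :: real assumes "0 \<le> k" "k < 1" shows "continuous_on {0..b} (G k)"
  unfolding G_def[abs_def] by (rule indefinite_integral_continuous_1[OF fk_int[OF assms]])

lemma G_deriv: fixes k x :: real assumes "0 \<le> k" "k < 1" "0 < x"
  shows "(G k has_real_derivative fk k x) (at x)"
proof -
  have "((\<lambda>u. integral {0..u} (fk k)) has_vector_derivative fk k x) (at x within {0..x+1})"
    using assms by (intro integral_has_vector_derivative fk_cont) auto
  moreover have "x \<in> interior {0..x+1}" using assms by simp
  ultimately have "((\<lambda>u. integral {0..u} (fk k)) has_vector_derivative fk k x) (at x)"
    using at_within_interior by metis
  thus ?thesis unfolding G_def[abs_def] by (simp add: has_real_derivative_iff_has_vector_derivative)
qed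

lemma ellF_G: "0 \<le> x \<Longrightarrow> ellF x k = G k x"
  unfolding ellF_def G_def fk_def by simp

lemma ellK_G: "ellK k = G k (pi/2)"
  unfolding ellK_def by (simp add: ellF_G)

lemma ellF_neg: fixes k x :: real assumes "0 \<le> k" "k < 1" "x < 0" shows "ellF x k < 0"
proof -
  have "0 - x \<le> integral {x..0} (fk k)" using int_lower[OF assms(1,2), of x 0] assms by simp
  thus ?thesis unfolding ellF_def fk_def[symmetric] using assms by simp
qed

lemma K_pos: fixes k :: real assumes "0 \<le> k" "k < 1" shows "pi/2 \<le> G k (pi/2)"
  using G_ge[OF assms, of "pi/2"] by simp

lemma jam: fixes k u :: real assumes "0 \<le> k" "k < 1" "0 \<le> u"
  shows "0 \<le> jam u k \<and> G k (jam u k) = u"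
proof -
  obtain p where p: "0 \<le> p" "p \<le> u" "G k p = u"
    using IVT'[of "G k" 0 u u] G_0[of k] G_ge[OF assms] G_cont[OF assms(1,2)] assms by auto
  have "ellF p k = u" using p ellF_G by simp
  moreover have "ellF y k = u \<Longrightarrow> y = p" for y
  proof -
    assume y: "ellF y k = u"
    have "0 \<le> y" using ellF_neg[OF assms(1,2), of y] y assms by force
    hence "G k y = G k p" using y p ellF_G by simp
    thus "y = p" using G_strict[OF assms(1,2)] \<open>0 \<le> y\<close> p(1)
      by (metis linorder_neqE_linordered_idom order_less_irrefl)
  qed
  ultimately have "jam u k = p" unfolding jam_def by (rule the_equality)
  thus ?thesis using p by simp
qed


lemma G_diff2: fixes k1 k2 \<kappa> p1 p2 :: real
  assumes "0 \<le> k1" "k1 \<le> \<kappa>" "0 \<le> k2" "k2 \<le> \<kappa>" "\<kappa> < 1" "0 \<le> p1" "0 \<le> p2"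
  shows "\<bar>G k1 p1 - G k2 p2\<bar> \<le> \<bar>p1 - p2\<bar> / sqrt (1 - \<kappa>\<^sup>2) + p2 * (Lk \<kappa> * \<bar>k1 - k2\<bar>)"
proof -
  have "\<bar>G k1 p1 - G k1 p2\<bar> \<le> \<bar>p1 - p2\<bar> / sqrt (1 - \<kappa>\<^sup>2)"
    using G_lip_x[OF assms(1,2,5,7,6)] .
  moreover have "\<bar>G k1 p2 - G k2 p2\<bar> \<le> p2 * (Lk \<kappa> * \<bar>k1 - k2\<bar>)"
    using G_lip_k[OF assms(1-5,7)] .
  ultimately show ?thesis by linarith
qed

lemma G_cont_comp: fixes S :: "real set" and p kf :: "real \<Rightarrow> real" and \<kappa> :: real
  assumes cp: "continuous_on S p" and ck: "continuous_on S kf"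
    and b: "\<And>x. x \<in> S \<Longrightarrow> 0 \<le> p x \<and> 0 \<le> kf x \<and> kf x \<le> \<kappa>" and "\<kappa> < 1"
  shows "continuous_on S (\<lambda>x. G (kf x) (p x))"
  unfolding continuous_on_def
proof
  fix x assume x: "x \<in> S"
  define g where "g y = \<bar>p y - p x\<bar> / sqrt (1 - \<kappa>\<^sup>2) + p x * (Lk \<kappa> * \<bar>kf y - kf x\<bar>)" for y
  have "(g \<longlongrightarrow> \<bar>p x - p x\<bar> / sqrt (1 - \<kappa>\<^sup>2) + p x * (Lk \<kappa> * \<bar>kf x - kf x\<bar>)) (at x within S)"
  proof -
    have "0 < 1 - \<kappa>\<^sup>2" using b[OF x] assms(4) kap_pos[of \<kappa>] by auto
    thus ?thesis unfolding g_def using cp ck x unfolding continuous_on_def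
      by (intro tendsto_intros) auto
  qed
  hence g0: "(g \<longlongrightarrow> 0) (at x within S)" by simp
  have ev: "eventually (\<lambda>y. y \<in> S) (at x within S)" by (simp add: eventually_at_filter)
  have "eventually (\<lambda>y. norm (G (kf y) (p y) - G (kf x) (p x)) \<le> g y) (at x within S)"
    using ev
  proof (rule eventually_mono)
    fix y assume "y \<in> S"
    thus "norm (G (kf y) (p y) - G (kf x) (p x)) \<le> g y"
      unfolding g_def using G_diff2[of "kf y" \<kappa> "kf x" "p y" "p x"] b[of y] b[of x] x assms(4) by simp
  qed
  from Lim_null_comparison[OF this g0]
  show "((\<lambda>x. G (kf x) (p x)) \<longlongrightarrow> G (kf x) (p x)) (at x within S)"
    by (rule LIM_zero_cancel)
qed


lemma sin2_mono: fixes s t :: real assumes "0 \<le> s" "s \<le> t" "t \<le> pi/2"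
  shows "(sin s)\<^sup>2 \<le> (sin t)\<^sup>2"
proof -
  have "sin s \<le> sin t" using assms by (intro sin_monotone_2pi_le) auto
  moreover have "0 \<le> sin s" using assms by (intro sin_ge_zero) auto
  ultimately show ?thesis by (simp add: power_mono)
qed

lemma fk_cross: fixes k1 k2 s t :: real
  assumes "0 \<le> k1" "k1 \<le> k2" "k2 < 1" "(sin s)\<^sup>2 \<le> (sin t)\<^sup>2"
  shows "fk k2 s * fk k1 t \<le> fk k1 s * fk k2 t"
proof -
  have k1: "k1 < 1" "0 \<le> k2" using assms by linarith+
  define D1s where "D1s = 1 - k1\<^sup>2 * (sin s)\<^sup>2"
  define D2s where "D2s = 1 - k2\<^sup>2 * (sin s)\<^sup>2"
  define D1t where "D1t = 1 - k1\<^sup>2 * (sin t)\<^sup>2"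
  define D2t where "D2t = 1 - k2\<^sup>2 * (sin t)\<^sup>2"
  have p: "0 < D1s" "0 < D2s" "0 < D1t" "0 < D2t"
    unfolding D1s_def D2s_def D1t_def D2t_def using den_pos assms k1 by auto
  have kk: "k1\<^sup>2 \<le> k2\<^sup>2" using assms by (intro power_mono) auto
  have "D2s * D1t - D1s * D2t = (k2\<^sup>2 - k1\<^sup>2) * ((sin t)\<^sup>2 - (sin s)\<^sup>2)"
    unfolding D1s_def D2s_def D1t_def D2t_def by (simp add: algebra_simps)
  also have "\<dots> \<ge> 0" using kk assms(4) by simp
  finally have le: "D1s * D2t \<le> D2s * D1t" by simp
  have "fk k2 s * fk k1 t = 1 / sqrt (D2s * D1t)"
    unfolding fk_def D2s_def D1t_def by (simp add: real_sqrt_mult)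
  also have "\<dots> \<le> 1 / sqrt (D1s * D2t)"
    using le p by (simp add: divide_simps)
  also have "\<dots> = fk k1 s * fk k2 t"
    unfolding fk_def D1s_def D2t_def by (simp add: real_sqrt_mult)
  finally show ?thesis .
qed

lemma ratio_mono: fixes k1 k2 \<psi> :: real
  assumes "0 \<le> k1" "k1 \<le> k2" "k2 < 1" "0 \<le> \<psi>" "\<psi> \<le> pi/2"
  shows "G k2 \<psi> * G k1 (pi/2) \<le> G k1 \<psi> * G k2 (pi/2)"
proof -
  have k1: "k1 < 1" "0 \<le> k2" using assms by linarith+
  define a1 where "a1 = fk k1 \<psi>"
  define a2 where "a2 = fk k2 \<psi>"
  define I1 where "I1 = integral {\<psi>..pi/2} (fk k1)"
  define I2 where "I2 = integral {\<psi>..pi/2} (fk k2)"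
  have a1: "0 < a1" unfolding a1_def using fk_ge1[OF assms(1) k1(1), of \<psi>] by linarith
  have cint: "\<And>k c x y. 0 \<le> k \<Longrightarrow> k < 1 \<Longrightarrow> (\<lambda>s. fk k s * c) integrable_on {x..y}"
    by (intro integrable_continuous_interval continuous_intros fk_cont) auto
  have i: "G k2 \<psi> * a1 \<le> G k1 \<psi> * a2"
  proof -
    have "integral {0..\<psi>} (\<lambda>s. fk k2 s * a1) \<le> integral {0..\<psi>} (\<lambda>s. fk k1 s * a2)"
    proof (rule integral_le)
      show "(\<lambda>s. fk k2 s * a1) integrable_on {0..\<psi>}" using cint assms k1 by auto
      show "(\<lambda>s. fk k1 s * a2) integrable_on {0..\<psi>}" using cint assms k1 by auto
      fix s assume "s \<in> {0..\<psi>}"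
      thus "fk k2 s * a1 \<le> fk k1 s * a2" unfolding a1_def a2_def
        using assms by (intro fk_cross sin2_mono) auto
    qed
    thus ?thesis unfolding G_def by simp
  qed
  have ii: "a2 * I1 \<le> a1 * I2"
  proof -
    have "integral {\<psi>..pi/2} (\<lambda>s. fk k1 s * a2) \<le> integral {\<psi>..pi/2} (\<lambda>s. fk k2 s * a1)"
    proof (rule integral_le)
      show "(\<lambda>s. fk k2 s * a1) integrable_on {\<psi>..pi/2}" using cint assms k1 by auto
      show "(\<lambda>s. fk k1 s * a2) integrable_on {\<psi>..pi/2}" using cint assms k1 by auto
      fix s assume "s \<in> {\<psi>..pi/2}"
      hence "fk k2 \<psi> * fk k1 s \<le> fk k1 \<psi> * fk k2 s"
        using assms by (intro fk_cross sin2_mono) auto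
      thus "fk k1 s * a2 \<le> fk k2 s * a1" unfolding a1_def a2_def by (simp add: mult.commute)
    qed
    thus ?thesis unfolding I1_def I2_def by (simp add: mult.commute)
  qed
  have G1: "0 \<le> G k1 \<psi>" using G_ge[OF assms(1) k1(1) assms(4)] assms by linarith
  have I1: "0 \<le> I1" unfolding I1_def using int_nonneg[OF assms(1) k1(1)] assms by simp
  have "a1 * (G k2 \<psi> * I1) = (G k2 \<psi> * a1) * I1" by simp
  also have "\<dots> \<le> (G k1 \<psi> * a2) * I1" using i I1 by (rule mult_right_mono)
  also have "\<dots> = G k1 \<psi> * (a2 * I1)" by simp
  also have "\<dots> \<le> G k1 \<psi> * (a1 * I2)" using ii G1 by (rule mult_left_mono)
  also have "\<dots> = a1 * (G k1 \<psi> * I2)" by simp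
  finally have "G k2 \<psi> * I1 \<le> G k1 \<psi> * I2" using a1 by simp
  moreover have "G k1 (pi/2) = G k1 \<psi> + I1" unfolding I1_def using G_add[OF assms(1) k1(1) assms(4,5)] .
  moreover have "G k2 (pi/2) = G k2 \<psi> + I2" unfolding I2_def using G_add[OF k1(2) assms(3) assms(4,5)] .
  ultimately show ?thesis by (simp add: algebra_simps)
qed


lemma compl_alg: fixes k x :: real
  assumes "0 \<le> k" "k < 1" "0 < cos x"
  shows "fk k (pi/2 - arctan (sqrt (1 - k\<^sup>2) * tan x)) *
           (sqrt (1 - k\<^sup>2) * inverse ((cos x)\<^sup>2) / (1 + (sqrt (1 - k\<^sup>2) * tan x)\<^sup>2)) = fk k x"
proof -
  define kp where "kp = sqrt (1 - k\<^sup>2)"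
  define c where "c = cos x"
  define s where "s = sin x"
  define D where "D = 1 - k\<^sup>2 * s\<^sup>2"
  have kp0: "0 < kp" unfolding kp_def using kap_pos[OF assms(1,2)] by simp
  have kp2: "kp\<^sup>2 = 1 - k\<^sup>2" unfolding kp_def using kap_pos[OF assms(1,2)] by simp
  have c0: "0 < c" unfolding c_def using assms by simp
  have D0: "0 < D" unfolding D_def s_def using den_pos[OF assms(1,2)] by simp
  have sc: "s\<^sup>2 + c\<^sup>2 = 1" unfolding s_def c_def by simp
  have y: "1 + (kp * tan x)\<^sup>2 = D / c\<^sup>2"
  proof -
    have "1 + (kp * tan x)\<^sup>2 = 1 + kp\<^sup>2 * s\<^sup>2 / c\<^sup>2"
      unfolding tan_def s_def c_def by (simp add: power_divide power_mult_distrib)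
    also have "\<dots> = (c\<^sup>2 + kp\<^sup>2 * s\<^sup>2) / c\<^sup>2" using c0 by (simp add: field_simps)
    also have "c\<^sup>2 + kp\<^sup>2 * s\<^sup>2 = D" unfolding kp2 D_def using sc by (simp add: algebra_simps)
    finally show ?thesis .
  qed
  have y0: "0 < 1 + (kp * tan x)\<^sup>2" by (simp add: add_pos_nonneg)
  have sh: "(sin (pi/2 - arctan (kp * tan x)))\<^sup>2 = c\<^sup>2 / D"
  proof -
    have "sin (pi/2 - arctan (kp * tan x)) = cos (arctan (kp * tan x))"
      by (simp add: cos_sin_eq)
    hence "(sin (pi/2 - arctan (kp * tan x)))\<^sup>2 = 1 / (1 + (kp * tan x)\<^sup>2)"
      using y0 by (simp add: cos_arctan power_divide)
    also have "\<dots> = c\<^sup>2 / D" unfolding y using c0 D0 by simp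
    finally show ?thesis .
  qed
  have e1: "1 - k\<^sup>2 * (sin (pi/2 - arctan (kp * tan x)))\<^sup>2 = kp\<^sup>2 / D"
  proof -
    have "1 - k\<^sup>2 * (c\<^sup>2 / D) = (D - k\<^sup>2 * c\<^sup>2) / D" using D0 by (simp add: field_simps)
    also have "D - k\<^sup>2 * c\<^sup>2 = kp\<^sup>2"
    proof -
      have "D - k\<^sup>2 * c\<^sup>2 = 1 - k\<^sup>2 * (s\<^sup>2 + c\<^sup>2)" unfolding D_def by (simp add: algebra_simps)
      thus ?thesis unfolding sc kp2 by simp
    qed
    finally show ?thesis unfolding sh .
  qed
  have f1: "fk k (pi/2 - arctan (kp * tan x)) = sqrt D / kp"
    unfolding fk_def e1 using kp0 D0 by (simp add: real_sqrt_divide)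
  have f2: "kp * inverse (c\<^sup>2) / (1 + (kp * tan x)\<^sup>2) = kp / D"
    unfolding y using c0 D0 by (simp add: field_simps)
  have "sqrt D / kp * (kp / D) = 1 / sqrt D" using kp0 D0
    by (simp add: field_simps)
  thus ?thesis using f1 f2 unfolding kp_def[symmetric] c_def[symmetric] fk_def D_def s_def
    by simp
qed


lemma tan_nonneg: fixes x :: real assumes "0 \<le> x" "x < pi/2" shows "0 \<le> tan x"
  using tan_gt_zero[of x] assms by (cases "x = 0") auto

lemma compl: fixes k \<psi> :: real assumes "0 \<le> k" "k < 1" "0 \<le> \<psi>" "\<psi> < pi/2"
  shows "G k (pi/2 - arctan (sqrt (1 - k\<^sup>2) * tan \<psi>)) + G k \<psi> = G k (pi/2)"
proof (cases "\<psi> = 0")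
  case True thus ?thesis by (simp add: G_0)
next
  case False
  hence p0: "0 < \<psi>" using assms by simp
  define kp where "kp = sqrt (1 - k\<^sup>2)"
  have kp0: "0 < kp" unfolding kp_def using kap_pos[OF assms(1,2)] by simp
  define h where "h x = pi/2 - arctan (kp * tan x)" for x
  define \<Phi> where "\<Phi> x = G k (h x) + G k x" for x
  have hr: "0 < h x \<and> h x \<le> pi/2" if "0 \<le> x" "x \<le> \<psi>" for x
  proof -
    have "0 \<le> tan x" using that assms by (intro tan_nonneg) auto
    hence "0 \<le> kp * tan x" using kp0 by simp
    thus ?thesis unfolding h_def using arctan_ubound[of "kp * tan x"] by simp
  qed
  have cosp: "0 < cos x" if "0 \<le> x" "x \<le> \<psi>" for x
    using that assms by (intro cos_gt_zero_pi) auto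
  have ch: "continuous_on {0..\<psi>} h"
    unfolding h_def using cosp by (intro continuous_intros) (auto simp: less_imp_neq[symmetric])
  have cPhi: "continuous_on {0..\<psi>} \<Phi>"
    unfolding \<Phi>_def
  proof (intro continuous_on_add)
    show "continuous_on {0..\<psi>} (\<lambda>x. G k (h x))"
      using continuous_on_compose2[OF G_cont[OF assms(1,2), of "pi/2"] ch] hr by force
    show "continuous_on {0..\<psi>} (G k)" by (rule G_cont[OF assms(1,2)])
  qed
  have dPhi: "DERIV \<Phi> x :> 0" if "0 < x" "x < \<psi>" for x
  proof -
    have cx: "0 < cos x" using cosp that by auto
    have t: "DERIV tan x :> inverse ((cos x)\<^sup>2)" using cx by (intro DERIV_tan) simp
    have t2: "DERIV (\<lambda>x. kp * tan x) x :> kp * inverse ((cos x)\<^sup>2)" using DERIV_cmult[OF t] .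
    have t3: "DERIV (\<lambda>x. arctan (kp * tan x)) x :> inverse (1 + (kp * tan x)\<^sup>2) * (kp * inverse ((cos x)\<^sup>2))"
      by (rule DERIV_chain2[OF DERIV_arctan t2])
    have t4: "DERIV h x :> 0 - inverse (1 + (kp * tan x)\<^sup>2) * (kp * inverse ((cos x)\<^sup>2))"
      unfolding h_def by (rule DERIV_diff[OF DERIV_const t3])
    have t5: "DERIV (\<lambda>x. G k (h x)) x :> fk k (h x) * (0 - inverse (1 + (kp * tan x)\<^sup>2) * (kp * inverse ((cos x)\<^sup>2)))"
      using hr[of x] that by (intro DERIV_chain2[OF G_deriv[OF assms(1,2)] t4]) auto
    have t6: "DERIV \<Phi> x :> fk k (h x) * (0 - inverse (1 + (kp * tan x)\<^sup>2) * (kp * inverse ((cos x)\<^sup>2))) + fk k x"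
      unfolding \<Phi>_def[abs_def] using that by (intro DERIV_add[OF t5 G_deriv[OF assms(1,2)]]) auto
    have "fk k (h x) * (kp * inverse ((cos x)\<^sup>2) / (1 + (kp * tan x)\<^sup>2)) = fk k x"
      unfolding h_def kp_def using compl_alg[OF assms(1,2) cx] .
    hence "fk k (h x) * (0 - inverse (1 + (kp * tan x)\<^sup>2) * (kp * inverse ((cos x)\<^sup>2))) + fk k x = 0"
      by (simp add: divide_inverse algebra_simps)
    thus ?thesis using t6 by simp
  qed
  have "\<Phi> \<psi> = \<Phi> 0" by (rule DERIV_isconst_end[OF p0 cPhi dPhi])
  thus ?thesis unfolding \<Phi>_def h_def kp_def by (simp add: G_0)
qed





lemma lnderiv: fixes m x :: real assumes "0 < m"
  shows "((\<lambda>t. - ln ((pi/2 - t) + sqrt (m\<^sup>2 + (pi/2 - t)\<^sup>2))) has_real_derivative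
           1 / sqrt (m\<^sup>2 + (pi/2 - x)\<^sup>2)) (at x)"
proof -
  define w where "w = pi/2 - x"
  define Q where "Q = m\<^sup>2 + w\<^sup>2"
  have Q0: "0 < Q" unfolding Q_def using assms by (simp add: add_pos_nonneg)
  have sq: "\<bar>w\<bar> < sqrt Q"
  proof -
    have "sqrt (w\<^sup>2) < sqrt Q" unfolding Q_def by (rule real_sqrt_less_mono) (use assms in simp)
    thus ?thesis by simp
  qed
  have u0: "0 < w + sqrt Q" using sq by linarith
  have key: "- ((- 1 - w / sqrt Q) / (w + sqrt Q)) = 1 / sqrt Q"
  proof -
    have "(w + sqrt Q) / sqrt Q = w / sqrt Q + 1" using Q0 by (simp add: add_divide_distrib)
    hence "- 1 - w / sqrt Q = - (w + sqrt Q) / sqrt Q" by (subst minus_divide_left[symmetric]) linarith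
    note eq = this
    have gen: "\<And>u s::real. u \<noteq> 0 \<Longrightarrow> (- u / s) / u = - 1 / s" by (simp add: field_simps)
    have ne: "w + sqrt Q \<noteq> 0" using u0 by simp
    show ?thesis unfolding eq gen[OF ne] by simp
  qed
  have d0: "((\<lambda>t. (pi/2 - t) + sqrt (m\<^sup>2 + (pi/2 - t)\<^sup>2)) has_real_derivative (- 1 - w / sqrt Q)) (at x)"
  proof -
    have "((\<lambda>t. m\<^sup>2 + (pi/2 - t)\<^sup>2) has_real_derivative (- 2 * w)) (at x)"
      unfolding w_def by (auto intro!: derivative_eq_intros)
    from DERIV_chain2[OF DERIV_real_sqrt this]
    have "((\<lambda>t. sqrt (m\<^sup>2 + (pi/2 - t)\<^sup>2)) has_real_derivative inverse (sqrt Q) / 2 * (- 2 * w)) (at x)"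
      using Q0 unfolding Q_def w_def by simp
    note D = DERIV_add[OF DERIV_diff[OF DERIV_const[of "pi/2"] DERIV_ident] this]
    have e: "0 - 1 + inverse (sqrt Q) / 2 * (- 2 * w) = - 1 - w / sqrt Q"
      by (simp add: field_simps)
    show ?thesis by (rule DERIV_cong[OF D e])
  qed
  have "((\<lambda>t. - ln ((pi/2 - t) + sqrt (m\<^sup>2 + (pi/2 - t)\<^sup>2))) has_real_derivative
      - (inverse ((pi/2 - x) + sqrt (m\<^sup>2 + (pi/2 - x)\<^sup>2)) * (- 1 - w / sqrt Q))) (at x)"
  proof -
    have l: "DERIV ln ((pi/2 - x) + sqrt (m\<^sup>2 + (pi/2 - x)\<^sup>2)) :> inverse ((pi/2 - x) + sqrt (m\<^sup>2 + (pi/2 - x)\<^sup>2))"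
      using u0 unfolding w_def Q_def by (intro DERIV_ln) 
    show ?thesis using DERIV_minus[OF DERIV_chain2[OF l d0]] .
  qed
  moreover have "- (inverse ((pi/2 - x) + sqrt (m\<^sup>2 + (pi/2 - x)\<^sup>2)) * (- 1 - w / sqrt Q))
     = 1 / sqrt (m\<^sup>2 + (pi/2 - x)\<^sup>2)"
  proof -
    have "- (inverse (w + sqrt Q) * (- 1 - w / sqrt Q)) = - ((- 1 - w / sqrt Q) / (w + sqrt Q))"
      by (simp only: divide_inverse mult.commute)
    thus ?thesis using key unfolding w_def[symmetric] Q_def[symmetric] by (simp only:)
  qed
  ultimately show ?thesis by (rule DERIV_cong)
qed


lemma K_lower: fixes k :: real assumes "0 \<le> k" "k < 1"
  shows "- ln (sqrt (1 - k\<^sup>2)) \<le> G k (pi/2)"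
proof -
  define m where "m = sqrt (1 - k\<^sup>2)"
  have m0: "0 < m" unfolding m_def using kap_pos[OF assms] by simp
  have m2: "m\<^sup>2 = 1 - k\<^sup>2" unfolding m_def using kap_pos[OF assms] by simp
  define F where "F t = - ln ((pi/2 - t) + sqrt (m\<^sup>2 + (pi/2 - t)\<^sup>2))" for t
  have "((\<lambda>t. 1 / sqrt (m\<^sup>2 + (pi/2 - t)\<^sup>2)) has_integral (F (pi/2) - F 0)) {0..pi/2}"
  proof (rule fundamental_theorem_of_calculus)
    show "0 \<le> pi/2" by simp
    fix x assume "x \<in> {0..pi/2}"
    have "(F has_real_derivative 1 / sqrt (m\<^sup>2 + (pi/2 - x)\<^sup>2)) (at x)"
      unfolding F_def[abs_def] using lnderiv[OF m0] .
    thus "(F has_vector_derivative 1 / sqrt (m\<^sup>2 + (pi/2 - x)\<^sup>2)) (at x within {0..pi/2})"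
      by (simp add: has_real_derivative_iff_has_vector_derivative has_vector_derivative_at_within)
  qed
  hence hi: "((\<lambda>t. 1 / sqrt (m\<^sup>2 + (pi/2 - t)\<^sup>2)) has_integral (F (pi/2) - F 0)) {0..pi/2}" .
  have "F (pi/2) = - ln m" unfolding F_def using m0 by simp
  moreover have "F 0 \<le> 0"
  proof -
    have "1 \<le> pi/2" using pi_gt3 by simp
    also have "pi/2 \<le> pi/2 + sqrt (m\<^sup>2 + (pi/2)\<^sup>2)" by simp
    finally have "0 \<le> ln (pi/2 + sqrt (m\<^sup>2 + (pi/2)\<^sup>2))" by simp
    thus ?thesis unfolding F_def by simp
  qed
  ultimately have "- ln m \<le> F (pi/2) - F 0" by simp
  also have "F (pi/2) - F 0 = integral {0..pi/2} (\<lambda>t. 1 / sqrt (m\<^sup>2 + (pi/2 - t)\<^sup>2))"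
    using hi by (simp add: integral_unique)
  also have "\<dots> \<le> integral {0..pi/2} (fk k)"
  proof (rule integral_le)
    show "(\<lambda>t. 1 / sqrt (m\<^sup>2 + (pi/2 - t)\<^sup>2)) integrable_on {0..pi/2}" using hi by blast
    show "fk k integrable_on {0..pi/2}" by (rule fk_int[OF assms])
    fix t assume t: "t \<in> {0..pi/2}"
    have c0: "0 \<le> cos t" using t by (intro cos_ge_zero) auto
    have "cos t = sin (pi/2 - t)" by (simp add: cos_sin_eq)
    also have "\<dots> \<le> pi/2 - t" using t by (intro sin_x_le_x) auto
    finally have "(cos t)\<^sup>2 \<le> (pi/2 - t)\<^sup>2" using c0 by (intro power_mono) auto
    moreover have "k\<^sup>2 * (cos t)\<^sup>2 \<le> (cos t)\<^sup>2"
    proof -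
      have "k\<^sup>2 \<le> 1" using assms kap_pos[OF assms] by linarith
      thus ?thesis by (simp add: mult_left_le_one_le)
    qed
    moreover have "1 - k\<^sup>2 * (sin t)\<^sup>2 = m\<^sup>2 + k\<^sup>2 * (cos t)\<^sup>2"
    proof -
      have "1 - k\<^sup>2 * (sin t)\<^sup>2 = 1 - k\<^sup>2 * (1 - (cos t)\<^sup>2)" by (simp add: sin_squared_eq)
      thus ?thesis unfolding m2 by (simp add: algebra_simps)
    qed
    ultimately have le: "1 - k\<^sup>2 * (sin t)\<^sup>2 \<le> m\<^sup>2 + (pi/2 - t)\<^sup>2" by linarith
    show "1 / sqrt (m\<^sup>2 + (pi/2 - t)\<^sup>2) \<le> fk k t"
      unfolding fk_def using le den_pos[OF assms, of t]
      by (simp add: divide_simps)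
  qed
  finally show ?thesis unfolding m_def G_def .
qed





context
  fixes a b :: real
  assumes ab: "0 < b" "b < a"
begin

lemma a2l2: fixes l :: real assumes "0 \<le> l" "l < b" shows "a\<^sup>2 - b\<^sup>2 < a\<^sup>2 - l\<^sup>2" "0 < a\<^sup>2 - b\<^sup>2"
proof -
  have "l\<^sup>2 < b\<^sup>2" using assms by (intro power_strict_mono) auto
  thus "a\<^sup>2 - b\<^sup>2 < a\<^sup>2 - l\<^sup>2" by simp
  have "b\<^sup>2 < a\<^sup>2" using ab by (intro power_strict_mono) auto
  thus "0 < a\<^sup>2 - b\<^sup>2" by simp
qed

lemma kl_sq: fixes l :: real assumes "0 \<le> l" "l < b"
  shows "(k_lam a b l)\<^sup>2 = (a\<^sup>2 - b\<^sup>2) / (a\<^sup>2 - l\<^sup>2)"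
proof -
  have "0 < (a\<^sup>2 - b\<^sup>2) / (a\<^sup>2 - l\<^sup>2)" using a2l2[OF assms] by (intro divide_pos_pos) auto
  thus ?thesis unfolding k_lam_def by (simp add: less_imp_le)
qed

lemma kl_props: fixes l :: real assumes "0 \<le> l" "l < b"
  shows "0 \<le> k_lam a b l" "k_lam a b l < 1"
proof -
  have "0 < (a\<^sup>2 - b\<^sup>2) / (a\<^sup>2 - l\<^sup>2)" using a2l2[OF assms] by (intro divide_pos_pos) auto
  thus "0 \<le> k_lam a b l" unfolding k_lam_def by simp
  have "(a\<^sup>2 - b\<^sup>2) / (a\<^sup>2 - l\<^sup>2) < 1" using a2l2[OF assms] by simp
  thus "k_lam a b l < 1" unfolding k_lam_def by simp
qed

lemma kl_mono: fixes l1 l2 :: real assumes "0 \<le> l1" "l1 \<le> l2" "l2 < b"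
  shows "k_lam a b l1 \<le> k_lam a b l2"
proof -
  have "l1\<^sup>2 \<le> l2\<^sup>2" using assms by (intro power_mono) auto
  hence "(a\<^sup>2 - b\<^sup>2) / (a\<^sup>2 - l1\<^sup>2) \<le> (a\<^sup>2 - b\<^sup>2) / (a\<^sup>2 - l2\<^sup>2)"
    using a2l2[of l2] a2l2[of l1] assms by (intro divide_left_mono) auto
  thus ?thesis unfolding k_lam_def by simp
qed

lemma kl0: "k_lam a b 0 = ecc0 a b"
proof -
  have "(a\<^sup>2 - b\<^sup>2) / a\<^sup>2 = 1 - b\<^sup>2 / a\<^sup>2" using ab by (simp add: field_simps)
  thus ?thesis unfolding k_lam_def ecc0_def by simp
qed

lemma kp_eq: fixes l :: real assumes "0 \<le> l" "l < b"
  shows "sqrt (1 - (k_lam a b l)\<^sup>2) = sqrt (b\<^sup>2 - l\<^sup>2) / sqrt (a\<^sup>2 - l\<^sup>2)"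
proof -
  have "1 - (k_lam a b l)\<^sup>2 = (b\<^sup>2 - l\<^sup>2) / (a\<^sup>2 - l\<^sup>2)"
    unfolding kl_sq[OF assms] using a2l2[OF assms] by (simp add: field_simps)
  thus ?thesis by (simp add: real_sqrt_divide)
qed

definition ps :: "real \<Rightarrow> real" where "ps l = arctan (sqrt (a\<^sup>2 - l\<^sup>2) / l)"

lemma ps_range: fixes l :: real assumes "0 < l" "l < b" shows "0 < ps l" "ps l < pi/2"
proof -
  have "0 < sqrt (a\<^sup>2 - l\<^sup>2)" using a2l2[of l] assms by simp
  thus "0 < ps l" unfolding ps_def using assms by simp
  show "ps l < pi/2" unfolding ps_def by (rule arctan_ubound)
qed

lemma phi0_eq: fixes l :: real assumes "0 < l" "l < b"
  shows "arcsin (l / b) = pi/2 - arctan (sqrt (1 - (k_lam a b l)\<^sup>2) * tan (ps l))"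
proof -
  have A: "0 < sqrt (a\<^sup>2 - l\<^sup>2)" using a2l2[of l] assms by simp
  have B: "0 < sqrt (b\<^sup>2 - l\<^sup>2)"
  proof -
    have "l\<^sup>2 < b\<^sup>2" using assms by (intro power_strict_mono) auto
    thus ?thesis by simp
  qed
  have "sqrt (1 - (k_lam a b l)\<^sup>2) * tan (ps l) = sqrt (b\<^sup>2 - l\<^sup>2) / l"
    unfolding ps_def tan_arctan kp_eq[OF less_imp_le[OF assms(1)] assms(2)] using A assms by simp
  moreover have "arcsin (l / b) = arctan (l / sqrt (b\<^sup>2 - l\<^sup>2))"
  proof -
    have lb: "-1 < l / b" "l / b < 1" using assms ab by (auto simp: field_simps)
    have "sqrt (1 - (l / b)\<^sup>2) = sqrt (b\<^sup>2 - l\<^sup>2) / b"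
    proof -
      have "1 - (l / b)\<^sup>2 = (b\<^sup>2 - l\<^sup>2) / b\<^sup>2" using ab by (simp add: field_simps power_divide)
      thus ?thesis using ab by (simp add: real_sqrt_divide)
    qed
    hence e2: "l / b / sqrt (1 - (l / b)\<^sup>2) = l / sqrt (b\<^sup>2 - l\<^sup>2)" using ab B by (simp add: field_simps)
    show ?thesis unfolding arcsin_arctan[OF lb] e2 by (rule refl)
  qed
  moreover have "arctan (sqrt (b\<^sup>2 - l\<^sup>2) / l) = pi/2 - arctan (l / sqrt (b\<^sup>2 - l\<^sup>2))"
  proof -
    have x0: "0 < l / sqrt (b\<^sup>2 - l\<^sup>2)" using assms B by simp
    have "arctan (1 / (l / sqrt (b\<^sup>2 - l\<^sup>2))) = sgn (l / sqrt (b\<^sup>2 - l\<^sup>2)) * pi/2 - arctan (l / sqrt (b\<^sup>2 - l\<^sup>2))"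
      by (rule Transcendental.arctan_inverse[OF less_imp_neq[OF x0, symmetric]])
    thus ?thesis using x0 B assms by auto
  qed
  ultimately show ?thesis by simp
qed

lemma omega_formula: fixes l :: real assumes "0 < l" "l < b"
  shows "omega_lam a b l = (G (k_lam a b l) (pi/2) - G (k_lam a b l) (ps l)) / (2 * G (k_lam a b l) (pi/2))"
proof -
  have l0: "0 \<le> l" using assms by simp
  have "0 \<le> arcsin (l / b)"
  proof -
    have "arcsin 0 \<le> arcsin (l / b)" using assms ab by (subst arcsin_le_mono) (auto simp: field_simps)
    thus ?thesis by simp
  qed
  hence "omega_lam a b l = G (k_lam a b l) (arcsin (l / b)) / (2 * G (k_lam a b l) (pi/2))"
    unfolding omega_lam_def by (simp add: ellF_G ellK_G)
  also have "G (k_lam a b l) (arcsin (l / b)) = G (k_lam a b l) (pi/2) - G (k_lam a b l) (ps l)"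
    unfolding phi0_eq[OF assms] using compl[OF kl_props[OF l0 assms(2)], of "ps l"] ps_range[OF assms]
    by simp
  finally show ?thesis .
qed

lemma ps_anti: fixes l1 l2 :: real assumes "0 < l1" "l1 < l2" "l2 < b"
  shows "ps l2 < ps l1"
proof -
  have s1: "0 < sqrt (a\<^sup>2 - l1\<^sup>2)" using a2l2[of l1] assms by simp
  have "l1\<^sup>2 \<le> l2\<^sup>2" using assms by (intro power_mono) auto
  hence "sqrt (a\<^sup>2 - l2\<^sup>2) \<le> sqrt (a\<^sup>2 - l1\<^sup>2)" by simp
  hence "sqrt (a\<^sup>2 - l2\<^sup>2) / l2 \<le> sqrt (a\<^sup>2 - l1\<^sup>2) / l2" using assms by (intro divide_right_mono) auto
  also have "\<dots> < sqrt (a\<^sup>2 - l1\<^sup>2) / l1" using assms s1 by (intro divide_strict_left_mono) auto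
  finally show ?thesis unfolding ps_def by (rule arctan_monotone)
qed

lemma omega_strict: fixes l1 l2 :: real assumes "0 < l1" "l1 < l2" "l2 < b"
  shows "omega_lam a b l1 < omega_lam a b l2"
proof -
  have l1b: "l1 < b" using assms by simp
  have l2: "0 < l2" using assms by simp
  define k1 where "k1 = k_lam a b l1"
  define k2 where "k2 = k_lam a b l2"
  have k1p: "0 \<le> k1" "k1 < 1" unfolding k1_def using kl_props[of l1] assms by auto
  have k2p: "0 \<le> k2" "k2 < 1" unfolding k2_def using kl_props[of l2] assms by auto
  have k12: "k1 \<le> k2" unfolding k1_def k2_def using kl_mono[of l1 l2] assms by auto
  define K1 where "K1 = G k1 (pi/2)"
  define K2 where "K2 = G k2 (pi/2)"
  have K1: "0 < K1" unfolding K1_def using K_pos[OF k1p] pi_gt_zero by linarith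
  have K2: "0 < K2" unfolding K2_def using K_pos[OF k2p] pi_gt_zero by linarith
  have r2: "0 < ps l2" "ps l2 < pi/2" using ps_range[OF l2 assms(3)] by auto
  have r1: "0 < ps l1" "ps l1 < pi/2" using ps_range[OF assms(1) l1b] by auto
  have "G k2 (ps l2) * K1 \<le> G k1 (ps l2) * K2"
    unfolding K1_def K2_def using r2 by (intro ratio_mono k1p k12 k2p) auto
  also have "\<dots> < G k1 (ps l1) * K2"
    using G_strict[OF k1p, of "ps l2" "ps l1"] ps_anti[OF assms] r2 K2 by (intro mult_strict_right_mono) auto
  finally have lt: "G k2 (ps l2) * K1 < G k1 (ps l1) * K2" .
  have o1: "omega_lam a b l1 = (K1 - G k1 (ps l1)) / (2 * K1)"
    unfolding K1_def k1_def using omega_formula[OF assms(1) l1b] .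
  have o2: "omega_lam a b l2 = (K2 - G k2 (ps l2)) / (2 * K2)"
    unfolding K2_def k2_def using omega_formula[OF l2 assms(3)] .
  show ?thesis unfolding o1 o2 using K1 K2 lt by (simp add: field_simps)
qed

lemma omega0: "omega_lam a b 0 = 0"
  unfolding omega_lam_def by (simp add: ellF_G G_0)


lemma kl_cont: fixes L :: real assumes "L < b" shows "continuous_on {0..L} (k_lam a b)"
proof -
  have "\<forall>x\<in>{0..L}. a\<^sup>2 - x\<^sup>2 \<noteq> 0" using a2l2 assms by fastforce
  thus ?thesis unfolding k_lam_def[abs_def] by (auto intro!: continuous_intros)
qed

lemma omega_cont: fixes L :: real assumes "0 \<le> L" "L < b" shows "continuous_on {0..L} (omega_lam a b)"
proof -
  define \<kappa> where "\<kappa> = k_lam a b L"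
  have kap: "\<kappa> < 1" unfolding \<kappa>_def using kl_props[OF assms] by simp
  have bnd: "\<And>x. x \<in> {0..L} \<Longrightarrow> 0 \<le> k_lam a b x \<and> k_lam a b x \<le> \<kappa>"
    unfolding \<kappa>_def using kl_props kl_mono assms by auto
  have asn: "\<And>x. x \<in> {0..L} \<Longrightarrow> 0 \<le> arcsin (x / b) \<and> -1 \<le> x / b \<and> x / b \<le> 1"
  proof -
    fix x assume x: "x \<in> {0..L}"
    hence xb: "-1 \<le> x / b" "x / b \<le> 1" using assms ab by (auto simp: field_simps)
    have "arcsin 0 \<le> arcsin (x / b)" using x ab xb by (subst arcsin_le_mono) auto
    thus "0 \<le> arcsin (x / b) \<and> -1 \<le> x / b \<and> x / b \<le> 1" using xb by simp
  qed
  have c1: "continuous_on {0..L} (\<lambda>x. G (k_lam a b x) (arcsin (x / b)))"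
    by (rule G_cont_comp[OF _ kl_cont[OF assms(2)] _ kap])
       (use asn bnd ab in \<open>auto intro!: continuous_intros\<close>)
  have c2: "continuous_on {0..L} (\<lambda>x. G (k_lam a b x) (pi/2))"
    by (rule G_cont_comp[OF _ kl_cont[OF assms(2)] _ kap]) (use bnd in \<open>auto intro!: continuous_intros\<close>)
  have c3: "continuous_on {0..L} (\<lambda>x. G (k_lam a b x) (arcsin (x / b)) / (2 * G (k_lam a b x) (pi/2)))"
  proof (rule continuous_on_divide[OF c1])
    show "continuous_on {0..L} (\<lambda>x. 2 * G (k_lam a b x) (pi/2))" using c2 by (intro continuous_intros)
    show "\<forall>x\<in>{0..L}. 2 * G (k_lam a b x) (pi/2) \<noteq> 0"
    proof
      fix x assume "x \<in> {0..L}"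
      hence "pi/2 \<le> G (k_lam a b x) (pi/2)" using bnd[of x] kap by (intro K_pos) auto
      thus "2 * G (k_lam a b x) (pi/2) \<noteq> 0" using pi_gt_zero by linarith
    qed
  qed
  show ?thesis
  proof (rule continuous_on_eq[OF c3])
    fix x assume "x \<in> {0..L}"
    thus "G (k_lam a b x) (arcsin (x / b)) / (2 * G (k_lam a b x) (pi/2)) = omega_lam a b x"
      unfolding omega_lam_def using asn[of x] by (simp add: ellF_G ellK_G)
  qed
qed

lemma fk_at_ps: fixes l :: real assumes "0 < l" "l < b"
  shows "fk (k_lam a b l) (ps l) = a / b"
proof -
  have A: "0 < a\<^sup>2 - l\<^sup>2" using a2l2[of l] assms by auto
  define T where "T = sqrt (a\<^sup>2 - l\<^sup>2) / l"
  have T2: "T\<^sup>2 = (a\<^sup>2 - l\<^sup>2) / l\<^sup>2" unfolding T_def using A by (simp add: power_divide)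
  have T1: "1 + T\<^sup>2 = a\<^sup>2 / l\<^sup>2" unfolding T2 using assms by (simp add: field_simps)
  have "(sin (ps l))\<^sup>2 = T\<^sup>2 / (1 + T\<^sup>2)" unfolding ps_def T_def[symmetric] sin_arctan
    by (simp add: power_divide add_pos_nonneg)
  also have "\<dots> = ((a\<^sup>2 - l\<^sup>2) / l\<^sup>2) / (a\<^sup>2 / l\<^sup>2)" unfolding T1 by (simp only: T2)
  also have "\<dots> = (a\<^sup>2 - l\<^sup>2) / a\<^sup>2" using assms ab by (simp add: divide_simps)
  finally have s2: "(sin (ps l))\<^sup>2 = (a\<^sup>2 - l\<^sup>2) / a\<^sup>2" .
  have "1 - (k_lam a b l)\<^sup>2 * (sin (ps l))\<^sup>2 = b\<^sup>2 / a\<^sup>2"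
  proof -
    have "(a\<^sup>2 - b\<^sup>2) / (a\<^sup>2 - l\<^sup>2) * ((a\<^sup>2 - l\<^sup>2) / a\<^sup>2) = (a\<^sup>2 - b\<^sup>2) / a\<^sup>2"
      using A by simp
    moreover have "1 - (a\<^sup>2 - b\<^sup>2) / a\<^sup>2 = b\<^sup>2 / a\<^sup>2" using ab by (simp add: field_simps)
    ultimately show ?thesis unfolding s2 kl_sq[OF less_imp_le[OF assms(1)] assms(2)] by (simp only:)
  qed
  thus ?thesis unfolding fk_def using ab by (simp add: real_sqrt_divide)
qed

lemma hi_point: "\<exists>L. 0 < L \<and> L < b \<and> 1/3 \<le> omega_lam a b L"
proof -
  define M0 where "M0 = 3 * pi * a / (2 * b)"
  define \<epsilon> where "\<epsilon> = exp (- M0)"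
  have e0: "0 < \<epsilon>" unfolding \<epsilon>_def by simp
  define c2 where "c2 = a\<^sup>2 - b\<^sup>2"
  have c20: "0 < c2" unfolding c2_def using a2l2[of 0] ab by auto
  define L where "L = sqrt (max (b\<^sup>2 / 4) (b\<^sup>2 - \<epsilon>\<^sup>2 * c2))"
  have L2: "L\<^sup>2 = max (b\<^sup>2 / 4) (b\<^sup>2 - \<epsilon>\<^sup>2 * c2)" unfolding L_def
    by (rule real_sqrt_pow2) (simp add: le_max_iff_disj)
  have "b\<^sup>2 - \<epsilon>\<^sup>2 * c2 < b\<^sup>2" using e0 c20 by simp
  moreover have "b\<^sup>2 / 4 < b\<^sup>2" using ab by simp
  ultimately have Lb2: "L\<^sup>2 < b\<^sup>2" unfolding L2 by simp
  have L0: "0 < L" unfolding L_def using ab by (simp add: less_max_iff_disj)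
  have Lb: "L < b" using Lb2 L0 ab by (smt (verit) power_mono)
  have bL: "b\<^sup>2 - L\<^sup>2 \<le> \<epsilon>\<^sup>2 * c2" unfolding L2 by simp
  define k where "k = k_lam a b L"
  have kp: "0 \<le> k" "k < 1" unfolding k_def using kl_props[OF less_imp_le[OF L0] Lb] by auto
  have kpe: "sqrt (1 - k\<^sup>2) \<le> \<epsilon>"
  proof -
    have eq: "sqrt (1 - k\<^sup>2) = sqrt ((b\<^sup>2 - L\<^sup>2) / (a\<^sup>2 - L\<^sup>2))"
      unfolding k_def kp_eq[OF less_imp_le[OF L0] Lb] by (simp add: real_sqrt_divide)
    have "(b\<^sup>2 - L\<^sup>2) / (a\<^sup>2 - L\<^sup>2) \<le> (\<epsilon>\<^sup>2 * c2) / c2"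
    proof (rule frac_le)
      show "0 \<le> \<epsilon>\<^sup>2 * c2" using c20 by simp
      show "b\<^sup>2 - L\<^sup>2 \<le> \<epsilon>\<^sup>2 * c2" by (rule bL)
      show "0 < c2" by (rule c20)
      show "c2 \<le> a\<^sup>2 - L\<^sup>2" unfolding c2_def using Lb2 by simp
    qed
    also have "(\<epsilon>\<^sup>2 * c2) / c2 = \<epsilon>\<^sup>2" using c20 by simp
    finally have "sqrt ((b\<^sup>2 - L\<^sup>2) / (a\<^sup>2 - L\<^sup>2)) \<le> sqrt (\<epsilon>\<^sup>2)" by (rule real_sqrt_le_mono)
    thus ?thesis unfolding eq using e0 by simp
  qed
  have kp0: "0 < sqrt (1 - k\<^sup>2)" using kap_pos[OF kp] by simp
  have "M0 = - ln \<epsilon>" unfolding \<epsilon>_def by simp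
  also have "\<dots> \<le> - ln (sqrt (1 - k\<^sup>2))" using kpe kp0 e0 by simp
  also have "\<dots> \<le> G k (pi/2)" by (rule K_lower[OF kp])
  finally have KM: "M0 \<le> G k (pi/2)" .
  have r: "0 < ps L" "ps L < pi/2" using ps_range[OF L0 Lb] by auto
  have "G k (ps L) \<le> (ps L - 0) * fk k (ps L)"
    unfolding G_def using r by (intro int_upper2 kp) auto
  also have "\<dots> = ps L * (a / b)" unfolding k_def fk_at_ps[OF L0 Lb] by simp
  also have "\<dots> \<le> pi/2 * (a / b)" using r ab by (intro mult_right_mono) auto
  finally have gb: "G k (ps L) \<le> pi/2 * (a / b)" .
  have "3 * G k (ps L) \<le> G k (pi/2)" using gb KM unfolding M0_def by simp
  moreover have Kp: "0 < G k (pi/2)" using K_pos[OF kp] pi_gt_zero by linarith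
  ultimately have "1/3 \<le> (G k (pi/2) - G k (ps L)) / (2 * G k (pi/2))"
    by (simp add: field_simps)
  thus ?thesis using L0 Lb omega_formula[OF L0 Lb] unfolding k_def by auto
qed


lemma lamq: fixes q :: nat assumes "3 \<le> q"
  shows "0 < lam_q a b q \<and> lam_q a b q < b \<and> omega_lam a b (lam_q a b q) = 1 / real q"
proof -
  obtain L where L: "0 < L" "L < b" "1/3 \<le> omega_lam a b L" using hi_point by blast
  have q0: "0 < real q" using assms by simp
  have q3: "1 / real q \<le> 1/3" using assms by (simp add: field_simps)
  have c: "continuous_on {0..L} (omega_lam a b)" using L by (intro omega_cont) auto
  have h1: "omega_lam a b 0 \<le> 1 / real q" unfolding omega0 using q0 by simp
  have h2: "1 / real q \<le> omega_lam a b L" using q3 L by linarith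
  have h3: "0 \<le> L" using L by simp
  obtain l where l: "0 \<le> l" "l \<le> L" "omega_lam a b l = 1 / real q"
    using IVT'[OF h1 h2 h3 c] by blast
  have l0: "0 < l" using l omega0 q0 by (cases "l = 0") auto
  have P: "0 < l \<and> l < b \<and> omega_lam a b l = 1 / real q" using l l0 L by auto
  have U: "y = l" if "0 < y \<and> y < b \<and> omega_lam a b y = 1 / real q" for y
  proof (rule ccontr)
    assume "y \<noteq> l"
    hence "y < l \<or> l < y" by auto
    thus False using omega_strict[of y l] omega_strict[of l y] that P by auto
  qed
  have "lam_q a b q = l" unfolding lam_q_def by (rule the_equality[of "\<lambda>y. 0 < y \<and> y < b \<and> omega_lam a b y = 1 / real q" l, OF P U])
  thus ?thesis using P by simp
qed

lemma lamq_le: fixes q :: nat assumes "3 \<le> q" shows "lam_q a b q \<le> lam_q a b 3"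
proof (rule ccontr)
  assume "\<not> lam_q a b q \<le> lam_q a b 3"
  hence lt: "lam_q a b 3 < lam_q a b q" by simp
  have "omega_lam a b (lam_q a b 3) < omega_lam a b (lam_q a b q)"
    using omega_strict[OF _ lt] lamq[OF assms] lamq[of 3] by auto
  hence "1 / 3 < 1 / real q" using lamq[OF assms] lamq[of 3] by simp
  thus False using assms by (simp add: field_simps)
qed

lemma e_pos: "0 < ecc0 a b"
proof -
  have "0 < (a\<^sup>2 - b\<^sup>2) / (a\<^sup>2 - 0\<^sup>2)" using a2l2[of 0] ab by (intro divide_pos_pos) auto
  thus ?thesis unfolding kl0[symmetric] k_lam_def by simp
qed

lemma k_minus_e: fixes l :: real assumes "0 \<le> l" "l < b"
  shows "0 \<le> k_lam a b l - ecc0 a b \<and> k_lam a b l - ecc0 a b \<le> l\<^sup>2 / (a\<^sup>2 * ecc0 a b)"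
proof -
  define k where "k = k_lam a b l"
  define e where "e = ecc0 a b"
  have e0: "0 < e" unfolding e_def by (rule e_pos)
  have ke: "e \<le> k" unfolding k_def e_def kl0[symmetric] using kl_mono[of 0 l] assms ab by auto
  have k2: "k\<^sup>2 = (a\<^sup>2 - b\<^sup>2) / (a\<^sup>2 - l\<^sup>2)" unfolding k_def by (rule kl_sq[OF assms])
  have e2: "e\<^sup>2 = (a\<^sup>2 - b\<^sup>2) / a\<^sup>2" unfolding e_def kl0[symmetric] using kl_sq[of 0] ab by simp
  have A: "0 < a\<^sup>2 - l\<^sup>2" and C: "a\<^sup>2 - b\<^sup>2 < a\<^sup>2 - l\<^sup>2" and C0: "0 < a\<^sup>2 - b\<^sup>2"
    using a2l2[OF assms] by auto
  have "k\<^sup>2 - e\<^sup>2 = (a\<^sup>2 - b\<^sup>2) * l\<^sup>2 / ((a\<^sup>2 - l\<^sup>2) * a\<^sup>2)"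
    unfolding k2 e2 using A ab by (simp add: field_simps)
  also have "\<dots> \<le> (a\<^sup>2 - l\<^sup>2) * l\<^sup>2 / ((a\<^sup>2 - l\<^sup>2) * a\<^sup>2)"
    using C A ab by (intro divide_right_mono mult_right_mono) auto
  also have "\<dots> = l\<^sup>2 / a\<^sup>2" using A by simp
  finally have kk: "k\<^sup>2 - e\<^sup>2 \<le> l\<^sup>2 / a\<^sup>2" .
  have "(k - e) * e \<le> (k - e) * (k + e)" using ke e0 by (intro mult_left_mono) auto
  also have "\<dots> = k\<^sup>2 - e\<^sup>2" by (simp add: power2_eq_square algebra_simps)
  finally have "(k - e) * e \<le> l\<^sup>2 / a\<^sup>2" using kk by linarith
  hence "k - e \<le> l\<^sup>2 / a\<^sup>2 / e" by (subst pos_le_divide_eq[OF e0])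
  thus ?thesis using ke unfolding k_def[symmetric] e_def[symmetric] by simp
qed

lemma l_bound: fixes l \<kappa> :: real and q :: nat
  assumes "0 < l" "l < b" "omega_lam a b l = 1 / real q" "0 < q" "k_lam a b l \<le> \<kappa>" "\<kappa> < 1"
  shows "l \<le> 2 * b * (pi / 2 / sqrt (1 - \<kappa>\<^sup>2)) / real q"
proof -
  define k where "k = k_lam a b l"
  have kp: "0 \<le> k" "k < 1" unfolding k_def using kl_props[of l] assms by auto
  have kk: "k \<le> \<kappa>" unfolding k_def using assms by simp
  define Kb where "Kb = pi / 2 / sqrt (1 - \<kappa>\<^sup>2)"
  have lb: "0 \<le> l / b" "l / b \<le> 1" using assms ab by auto
  have asn: "0 \<le> arcsin (l / b)"
  proof -
    have "arcsin 0 \<le> arcsin (l / b)" using lb by (subst arcsin_le_mono) auto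
    thus ?thesis by simp
  qed
  have "l / b = sin (arcsin (l / b))" using lb by simp
  also have "\<dots> \<le> arcsin (l / b)" using asn by (rule sin_x_le_x)
  also have "\<dots> \<le> G k (arcsin (l / b))" using asn by (intro G_ge kp)
  finally have num: "l / b \<le> G k (arcsin (l / b))" .
  have K0: "0 < G k (pi/2)" using K_pos[OF kp] pi_gt_zero by linarith
  have KKb: "G k (pi/2) \<le> Kb" unfolding Kb_def using G_upper[OF kp(1) kk assms(6), of "pi/2"] by simp
  have om: "1 / real q = G k (arcsin (l / b)) / (2 * G k (pi/2))"
    using assms(3) asn unfolding omega_lam_def k_def by (simp add: ellF_G ellK_G)
  have "l / b / (2 * Kb) \<le> G k (arcsin (l / b)) / (2 * Kb)"
    using num K0 KKb by (intro divide_right_mono) auto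
  also have "\<dots> \<le> G k (arcsin (l / b)) / (2 * G k (pi/2))"
    using K0 KKb num lb by (intro divide_left_mono) auto
  finally have "l / b / (2 * Kb) \<le> 1 / real q" using om by simp
  moreover have "0 < Kb" using K0 KKb by linarith
  ultimately show ?thesis using assms(4) ab unfolding Kb_def[symmetric] by (simp add: field_simps)
qed

lemma main_ab: "\<exists>C \<kappa>. \<kappa> < 1 \<and> 0 \<le> C \<and> (\<forall>q::nat. 3 \<le> q \<longrightarrow>
   ecc0 a b \<le> k_q a b q \<and> k_q a b q \<le> \<kappa> \<and> \<bar>k_q a b q - ecc0 a b\<bar> \<le> C / (real q)\<^sup>2)"
proof -
  define l3 where "l3 = lam_q a b 3"
  define \<kappa> where "\<kappa> = k_lam a b l3"
  have l3p: "0 < l3" "l3 < b" unfolding l3_def using lamq[of 3] by auto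
  have kap: "\<kappa> < 1" unfolding \<kappa>_def using kl_props[of l3] l3p by auto
  define Kb where "Kb = pi / 2 / sqrt (1 - \<kappa>\<^sup>2)"
  define e where "e = ecc0 a b"
  have e0: "0 < e" unfolding e_def by (rule e_pos)
  define C where "C = (2 * b * Kb)\<^sup>2 / (a\<^sup>2 * e)"
  have C0: "0 \<le> C" unfolding C_def using e0 by simp
  have "\<forall>q::nat. 3 \<le> q \<longrightarrow> e \<le> k_q a b q \<and> k_q a b q \<le> \<kappa> \<and> \<bar>k_q a b q - e\<bar> \<le> C / (real q)\<^sup>2"
  proof (intro allI impI)
    fix q :: nat assume q: "3 \<le> q"
    define l where "l = lam_q a b q"
    have lp: "0 < l" "l < b" "omega_lam a b l = 1 / real q" unfolding l_def using lamq[OF q] by auto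
    have ll3: "l \<le> l3" unfolding l_def l3_def using lamq_le[OF q] .
    have kq: "k_q a b q = k_lam a b l" unfolding k_q_def l_def ..
    have kk: "k_lam a b l \<le> \<kappa>" unfolding \<kappa>_def using kl_mono[of l l3] lp ll3 l3p by auto
    have km: "0 \<le> k_lam a b l - e" "k_lam a b l - e \<le> l\<^sup>2 / (a\<^sup>2 * e)"
      unfolding e_def using k_minus_e[of l] lp by auto
    have lb: "l \<le> 2 * b * Kb / real q" unfolding Kb_def
      using l_bound[OF lp(1,2,3) _ kk kap] q by simp
    have "l\<^sup>2 \<le> (2 * b * Kb / real q)\<^sup>2" using lb lp by (intro power_mono) auto
    hence "l\<^sup>2 / (a\<^sup>2 * e) \<le> (2 * b * Kb / real q)\<^sup>2 / (a\<^sup>2 * e)"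
      using e0 ab by (intro divide_right_mono) auto
    also have "\<dots> = C / (real q)\<^sup>2" unfolding C_def by (simp add: power_divide)
    finally show "e \<le> k_q a b q \<and> k_q a b q \<le> \<kappa> \<and> \<bar>k_q a b q - e\<bar> \<le> C / (real q)\<^sup>2"
      unfolding kq using km kk by simp
  qed
  thus ?thesis using kap C0 unfolding e_def by blast
qed

end


definition Mx :: "real \<Rightarrow> real" where
  "Mx \<kappa> = (4 * (pi / 2 / sqrt (1 - \<kappa>\<^sup>2)) * (pi / 2 / sqrt (1 - \<kappa>\<^sup>2)) * Lk \<kappa>
            + 2 * pi * (pi / 2 / sqrt (1 - \<kappa>\<^sup>2)) * Lk \<kappa>) / (pi / 2)"

lemma Lk_nonneg: fixes \<kappa> :: real assumes "0 \<le> \<kappa>" "\<kappa> < 1" shows "0 \<le> Lk \<kappa>"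
  unfolding Lk_def using kap_pos[OF assms] by simp

lemma Mx_nonneg: fixes \<kappa> :: real assumes "0 \<le> \<kappa>" "\<kappa> < 1" shows "0 \<le> Mx \<kappa>"
  unfolding Mx_def using kap_pos[OF assms] Lk_nonneg[OF assms] by simp

lemma xi_gen: fixes e k \<kappa> xi :: real
  assumes "0 \<le> e" "e \<le> \<kappa>" "0 \<le> k" "k \<le> \<kappa>" "\<kappa> < 1" "0 \<le> xi" "xi \<le> 2 * pi"
  shows "\<bar>2 * pi / (4 * ellK k) * ellF (jam (4 * ellK e / (2 * pi) * xi) e) k - xi\<bar> \<le> Mx \<kappa> * \<bar>k - e\<bar>"
proof -
  have e1: "e < 1" and k1: "k < 1" and kap0: "0 \<le> \<kappa>" using assms by linarith+
  define Kb where "Kb = pi / 2 / sqrt (1 - \<kappa>\<^sup>2)"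
  define L where "L = Lk \<kappa>"
  define D where "D = \<bar>k - e\<bar>"
  define Ke where "Ke = G e (pi/2)"
  define Kk where "Kk = G k (pi/2)"
  have Ke1: "pi/2 \<le> Ke" unfolding Ke_def by (rule K_pos[OF assms(1) e1])
  have Kk1: "pi/2 \<le> Kk" unfolding Kk_def by (rule K_pos[OF assms(3) k1])
  have Ke2: "Ke \<le> Kb" unfolding Ke_def Kb_def using G_upper[OF assms(1,2,5), of "pi/2"] by simp
  have Kk2: "Kk \<le> Kb" unfolding Kk_def Kb_def using G_upper[OF assms(3,4,5), of "pi/2"] by simp
  have p2: "0 < pi/2" by simp
  have L0: "0 \<le> L" unfolding L_def using Lk_nonneg[OF kap0 assms(5)] .
  have D0: "0 \<le> D" unfolding D_def by simp
  define u where "u = 4 * Ke / (2 * pi) * xi"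
  have Ke0: "0 < Ke" using Ke1 p2 by linarith
  have u0: "0 \<le> u" unfolding u_def using Ke0 assms(6) p2
    by (intro mult_nonneg_nonneg divide_nonneg_pos) auto
  have u4: "u \<le> 4 * Kb"
  proof -
    have "u = 4 * Ke * (xi / (2 * pi))" unfolding u_def by simp
    also have "\<dots> \<le> 4 * Ke * 1" using assms(6,7) Ke1 by (intro mult_left_mono) auto
    finally show ?thesis using Ke2 by simp
  qed
  define \<phi> where "\<phi> = jam u e"
  have ph: "0 \<le> \<phi>" "G e \<phi> = u" unfolding \<phi>_def using jam[OF assms(1) e1 u0] by auto
  have phu: "\<phi> \<le> u" using G_ge[OF assms(1) e1 ph(1)] ph by simp
  have xi_eq: "xi = (pi/2) * (G e \<phi> / Ke)"
    unfolding ph(2) u_def using Ke0 by (simp add: field_simps)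
  have E_eq: "2 * pi / (4 * ellK k) * ellF (jam (4 * ellK e / (2 * pi) * xi) e) k = (pi/2) * (G k \<phi> / Kk)"
    unfolding ellK_G ellF_G[OF ph(1)] u_def[symmetric] Ke_def[symmetric] \<phi>_def[symmetric] Kk_def[symmetric]
      \<phi>_def[symmetric] using ellF_G[OF ph(1)] Kk1 unfolding \<phi>_def u_def Ke_def
    by (simp add: field_simps)
  define N where "N = G k \<phi> * Ke - G e \<phi> * Kk"
  have N_eq: "N = (G k \<phi> - G e \<phi>) * Ke + G e \<phi> * (Ke - Kk)" unfolding N_def by (simp add: algebra_simps)
  have b1: "\<bar>G k \<phi> - G e \<phi>\<bar> \<le> \<phi> * (L * D)" unfolding L_def D_def
    by (rule G_lip_k[OF assms(3,4,1,2,5) ph(1)])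
  have b2: "\<bar>Ke - Kk\<bar> \<le> (pi/2) * (L * D)" unfolding L_def D_def Ke_def Kk_def
    using G_lip_k[OF assms(1,2,3,4,5), of "pi/2"] by (simp add: abs_minus_commute)
  have Ge0: "0 \<le> G e \<phi>" using ph u0 by simp
  have Kb0: "0 < Kb" using Ke0 Ke2 by linarith
  have Kk0: "0 < Kk" using Kk1 p2 by linarith
  have "\<bar>N\<bar> \<le> \<bar>(G k \<phi> - G e \<phi>) * Ke\<bar> + \<bar>G e \<phi> * (Ke - Kk)\<bar>"
    unfolding N_eq by (rule abs_triangle_ineq)
  also have "\<dots> = \<bar>G k \<phi> - G e \<phi>\<bar> * Ke + G e \<phi> * \<bar>Ke - Kk\<bar>"
    using Ke0 Ge0 by (simp add: abs_mult)
  also have "\<dots> \<le> (4 * Kb * (L * D)) * Kb + (4 * Kb) * ((pi/2) * (L * D))"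
  proof (rule add_mono)
    have "\<phi> * (L * D) \<le> 4 * Kb * (L * D)" using phu u4 L0 D0 by (intro mult_right_mono) auto
    hence "\<bar>G k \<phi> - G e \<phi>\<bar> \<le> 4 * Kb * (L * D)" using b1 by linarith
    thus "\<bar>G k \<phi> - G e \<phi>\<bar> * Ke \<le> 4 * Kb * (L * D) * Kb"
      using Ke0 Ke2 L0 D0 p2 Kb0 by (intro mult_mono) auto
    show "G e \<phi> * \<bar>Ke - Kk\<bar> \<le> 4 * Kb * (pi / 2 * (L * D))"
      using b2 ph u0 u4 by (intro mult_mono) auto
  qed
  also have "\<dots> = (pi/2) * (Mx \<kappa> * D)" unfolding Mx_def Kb_def[symmetric] L_def[symmetric]
    by (simp add: field_simps)
  finally have Nb: "\<bar>N\<bar> \<le> (pi/2) * (Mx \<kappa> * D)" .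
  have "(pi/2) * (G k \<phi> / Kk) - xi = (pi/2) * (N / (Kk * Ke))"
    unfolding xi_eq N_def using Kk0 Ke0 by (simp add: field_simps)
  also have "\<bar>\<dots>\<bar> = (pi/2) * (\<bar>N\<bar> / (Kk * Ke))" using Kk0 Ke0 by (simp add: abs_mult)
  also have "\<dots> \<le> (pi/2) * (\<bar>N\<bar> / ((pi/2) * (pi/2)))"
    using Kk1 Ke1 Kk0 Ke0 by (intro mult_left_mono divide_left_mono mult_mono) auto
  also have "\<dots> = \<bar>N\<bar> / (pi/2)" by simp
  also have "\<dots> \<le> Mx \<kappa> * D" using Nb by (simp add: field_simps)
  finally show ?thesis unfolding E_eq D_def .
qed


lemma pair_lt: fixes a b :: real assumes "0 < b" "b < a"
  shows "\<exists>C. \<forall>q::nat. q \<ge> 3 \<longrightarrow>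
              (\<forall>xi. 0 \<le> xi \<and> xi < 2 * pi \<longrightarrow>
                  \<bar>xi_q a b q (phi_inf a b xi) - xi\<bar> \<le> C / (real q)\<^sup>2) \<and>
              \<bar>k_q a b q - ecc0 a b\<bar> \<le> C / (real q)\<^sup>2"
proof -
  obtain C \<kappa> where Ck: "\<kappa> < 1" "0 \<le> C" and H: "\<And>q::nat. 3 \<le> q \<Longrightarrow>
     ecc0 a b \<le> k_q a b q \<and> k_q a b q \<le> \<kappa> \<and> \<bar>k_q a b q - ecc0 a b\<bar> \<le> C / (real q)\<^sup>2"
    using main_ab[OF assms] by blast
  have e0: "0 \<le> ecc0 a b" using kl0[OF assms] kl_props[OF assms, of 0] assms by simp
  have kap0: "0 \<le> \<kappa>" using H[of 3] e0 by linarith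
  have M0: "0 \<le> Mx \<kappa>" by (rule Mx_nonneg[OF kap0 Ck(1)])
  define C' where "C' = max C (Mx \<kappa> * C)"
  have "\<forall>q::nat. q \<ge> 3 \<longrightarrow>
              (\<forall>xi. 0 \<le> xi \<and> xi < 2 * pi \<longrightarrow>
                  \<bar>xi_q a b q (phi_inf a b xi) - xi\<bar> \<le> C' / (real q)\<^sup>2) \<and>
              \<bar>k_q a b q - ecc0 a b\<bar> \<le> C' / (real q)\<^sup>2"
  proof (intro allI impI conjI)
    fix q :: nat assume q: "3 \<le> q"
    have q0: "0 < (real q)\<^sup>2" using q by simp
    note h = H[OF q]
    have CC: "C / (real q)\<^sup>2 \<le> C' / (real q)\<^sup>2" unfolding C'_def using q0 by (intro divide_right_mono) auto
    show "\<bar>k_q a b q - ecc0 a b\<bar> \<le> C' / (real q)\<^sup>2" using h CC by linarith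
    fix xi :: real assume xi: "0 \<le> xi \<and> xi < 2 * pi"
    have "\<bar>xi_q a b q (phi_inf a b xi) - xi\<bar> \<le> Mx \<kappa> * \<bar>k_q a b q - ecc0 a b\<bar>"
      unfolding xi_q_def phi_inf_def
      by (rule xi_gen) (use h e0 xi Ck in auto)
    also have "\<dots> \<le> Mx \<kappa> * (C / (real q)\<^sup>2)" using h M0 by (intro mult_left_mono) auto
    also have "\<dots> = (Mx \<kappa> * C) / (real q)\<^sup>2" by simp
    also have "\<dots> \<le> C' / (real q)\<^sup>2" unfolding C'_def using q0 by (intro divide_right_mono) auto
    finally show "\<bar>xi_q a b q (phi_inf a b xi) - xi\<bar> \<le> C' / (real q)\<^sup>2" .
  qed
  thus ?thesis by blast
qed

lemma pair_eq: fixes a :: real assumes "0 < a"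
  shows "\<forall>q::nat. q \<ge> 3 \<longrightarrow>
              (\<forall>xi. 0 \<le> xi \<and> xi < 2 * pi \<longrightarrow>
                  \<bar>xi_q a a q (phi_inf a a xi) - xi\<bar> \<le> 0 / (real q)\<^sup>2) \<and>
              \<bar>k_q a a q - ecc0 a a\<bar> \<le> 0 / (real q)\<^sup>2"
proof (intro allI impI conjI)
  fix q :: nat
  have k0: "k_q a a q = 0" unfolding k_q_def k_lam_def by simp
  have e0: "ecc0 a a = 0" unfolding ecc0_def using assms by simp
  show "\<bar>k_q a a q - ecc0 a a\<bar> \<le> 0 / (real q)\<^sup>2" using k0 e0 by simp
  fix xi :: real assume xi: "0 \<le> xi \<and> xi < 2 * pi"
  have "\<bar>xi_q a a q (phi_inf a a xi) - xi\<bar> \<le> Mx 0 * \<bar>k_q a a q - ecc0 a a\<bar>"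
    unfolding xi_q_def phi_inf_def
    by (rule xi_gen) (use k0 e0 xi in auto)
  thus "\<bar>xi_q a a q (phi_inf a a xi) - xi\<bar> \<le> 0 / (real q)\<^sup>2" using k0 e0 by simp
qed

lemma semi_eq: fixes a b :: real assumes "0 < b" "b \<le> a"
  shows "semifocal a b = a * ecc0 a b"
proof -
  have "a * ecc0 a b = sqrt (a\<^sup>2) * sqrt (1 - b\<^sup>2 / a\<^sup>2)" unfolding ecc0_def using assms by simp
  also have "\<dots> = sqrt (a\<^sup>2 * (1 - b\<^sup>2 / a\<^sup>2))" by (simp add: real_sqrt_mult)
  also have "a\<^sup>2 * (1 - b\<^sup>2 / a\<^sup>2) = a\<^sup>2 - b\<^sup>2" using assms by (simp add: field_simps)
  finally show ?thesis unfolding semifocal_def by simp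
qed

theorem lemma9:
  fixes e c :: real
  shows "\<exists>C. \<forall>a b. 0 < b \<and> b \<le> a \<and> ecc0 a b = e \<and> semifocal a b = c \<longrightarrow>
           (\<forall>q::nat. q \<ge> 3 \<longrightarrow>
              (\<forall>xi. 0 \<le> xi \<and> xi < 2 * pi \<longrightarrow>
                  \<bar>xi_q a b q (phi_inf a b xi) - xi\<bar> \<le> C / (real q)\<^sup>2) \<and>
              \<bar>k_q a b q - ecc0 a b\<bar> \<le> C / (real q)\<^sup>2)"
proof (cases "e = 0")
  case True
  show ?thesis
  proof (rule exI[of _ 0], rule allI, rule allI, rule impI)
    fix a b :: real assume h: "0 < b \<and> b \<le> a \<and> ecc0 a b = e \<and> semifocal a b = c"
    have "sqrt (1 - b\<^sup>2 / a\<^sup>2) = 0" using h True unfolding ecc0_def by simp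
    hence "b\<^sup>2 / a\<^sup>2 = 1" using h by auto
    hence "b\<^sup>2 = a\<^sup>2" using h by (auto simp: divide_eq_1_iff)
    hence "b = a" using h by (simp add: power2_eq_iff_nonneg)
    thus "\<forall>q::nat. q \<ge> 3 \<longrightarrow>
              (\<forall>xi. 0 \<le> xi \<and> xi < 2 * pi \<longrightarrow>
                  \<bar>xi_q a b q (phi_inf a b xi) - xi\<bar> \<le> 0 / (real q)\<^sup>2) \<and>
              \<bar>k_q a b q - ecc0 a b\<bar> \<le> 0 / (real q)\<^sup>2"
      using pair_eq[of a] h by simp
  qed
next
  case False
  show ?thesis
  proof (cases "\<exists>a b. 0 < b \<and> b \<le> a \<and> ecc0 a b = e \<and> semifocal a b = c")
    case False
    thus ?thesis by blast
  next
    case True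
    then obtain a0 b0 where h0: "0 < b0" "b0 \<le> a0" "ecc0 a0 b0 = e" "semifocal a0 b0 = c" by blast
    have ba0: "b0 < a0"
    proof (rule ccontr)
      assume "\<not> b0 < a0"
      hence "b0 = a0" using h0 by simp
      hence "ecc0 a0 b0 = 0" unfolding ecc0_def using h0 by simp
      thus False using h0 \<open>e \<noteq> 0\<close> by simp
    qed
    obtain C where HC: "\<forall>q::nat. q \<ge> 3 \<longrightarrow>
              (\<forall>xi. 0 \<le> xi \<and> xi < 2 * pi \<longrightarrow>
                  \<bar>xi_q a0 b0 q (phi_inf a0 b0 xi) - xi\<bar> \<le> C / (real q)\<^sup>2) \<and>
              \<bar>k_q a0 b0 q - ecc0 a0 b0\<bar> \<le> C / (real q)\<^sup>2"
      using pair_lt[OF h0(1) ba0] by blast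
    show ?thesis
    proof (rule exI[of _ C], rule allI, rule allI, rule impI)
      fix a b :: real assume h: "0 < b \<and> b \<le> a \<and> ecc0 a b = e \<and> semifocal a b = c"
      have "a * e = a0 * e" using semi_eq[of b a] semi_eq[OF h0(1,2)] h h0 by simp
      hence aa: "a = a0" using \<open>e \<noteq> 0\<close> by simp
      have "(semifocal a b)\<^sup>2 = a\<^sup>2 - b\<^sup>2" unfolding semifocal_def using h
        by (intro real_sqrt_pow2) (simp add: power_mono)
      moreover have "(semifocal a0 b0)\<^sup>2 = a0\<^sup>2 - b0\<^sup>2" unfolding semifocal_def using h0
        by (intro real_sqrt_pow2) (simp add: power_mono)
      ultimately have "b\<^sup>2 = b0\<^sup>2" using aa h h0 by simp
      hence "b = b0" using h h0 by (simp add: power2_eq_iff_nonneg)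
      thus "\<forall>q::nat. q \<ge> 3 \<longrightarrow>
              (\<forall>xi. 0 \<le> xi \<and> xi < 2 * pi \<longrightarrow>
                  \<bar>xi_q a b q (phi_inf a b xi) - xi\<bar> \<le> C / (real q)\<^sup>2) \<and>
              \<bar>k_q a b q - ecc0 a b\<bar> \<le> C / (real q)\<^sup>2"
        using HC aa by simp
    qed
  qed
qed


end
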